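(* Let $k$ be a constant and let $D$ be the derivation (linear, satisfying the Leibniz rule, killing constants) on polynomials in the commuting variables $I,x,y$ determined by $D(I)=I(x+y)$, $D(x)=2kxy$, $D(y)=2kxy$. Then for $n\ge1$, $$D^n(I)=I\sum_{w\in B_n}x^{\mathrm{wexc}(w)}y^{\mathrm{aexc}(w)}k^{n-\mathrm{cyc}(w)}.$$
   Context: $B_n$ is the hyperoctahedral group of signed permutations $w$ of $\pm[n]$ with $w(-i)=-w(i)$, written in standard cycle decomposition (each cycle starts with its element of largest absolute value, cycles ordered by increasing absolute value of first elements); $\mathrm{cyc}(w)$ is the number of cycles. An index $i\in[n]$ is a weak excedance if $w(i)=i$ or $w(|w(i)|)>w(i)$, and an anti-excedance if $w(i)=-i$ or $w(|w(i)|)<w(i)$; $\mathrm{wexc}(w)$, $\mathrm{aexc}(w)$ denote their numbers. *)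

theory Defs
  imports "HOL-Computational_Algebra.Polynomial" "HOL-Combinatorics.Permutations"
begin

text \<open>Polynomials in the commuting variables I, x, y over a commutative ring 'a
  (which contains the constant k): nested univariate polynomials,
  outermost variable I, then x, then y.\<close>

definition varI :: "'a::comm_ring_1 poly poly poly" where
  "varI = monom 1 1"

definition varX :: "'a::comm_ring_1 poly poly poly" where
  "varX = [:monom 1 1:]"

definition varY :: "'a::comm_ring_1 poly poly poly" where
  "varY = [:[:monom 1 1:]:]"

definition cst :: "'a::comm_ring_1 \<Rightarrow> 'a poly poly poly" where
  "cst c = [:[:[:c:]:]:]"

definition signed_perms :: "nat \<Rightarrow> (int \<Rightarrow> int) set" where
  "signed_perms n = {w. w permutes ({- int n..int n} - {0}) \<and> (\<forall>i. w (- i) = - w i)}"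

definition wexc :: "nat \<Rightarrow> (int \<Rightarrow> int) \<Rightarrow> nat" where
  "wexc n w = card {i \<in> {1..int n}. w i = i \<or> w \<bar>w i\<bar> > w i}"

definition aexc :: "nat \<Rightarrow> (int \<Rightarrow> int) \<Rightarrow> nat" where
  "aexc n w = card {i \<in> {1..int n}. w i = - i \<or> w \<bar>w i\<bar> < w i}"

text \<open>Number of cycles in the standard cycle decomposition: the cycles are the
  orbits on [n] of the underlying permutation \<open>i \<mapsto> |w(i)|\<close>.\<close>

definition cyc :: "nat \<Rightarrow> (int \<Rightarrow> int) \<Rightarrow> nat" where
  "cyc n w = card ((\<lambda>i. {((\<lambda>j. \<bar>w j\<bar>) ^^ m) i | m. True}) ` {1..int n})"

end

theory Submission
  imports Defs "HOL-Combinatorics.Orbits"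
begin

abbreviation AS :: "nat \<Rightarrow> int set" where "AS n \<equiv> {- int n..int n} - {0}"

lemma sp_odd: "w \<in> signed_perms n \<Longrightarrow> w (- x) = - w x"
  by (simp add: signed_perms_def)

lemma sp_perm: "w \<in> signed_perms n \<Longrightarrow> w permutes AS n"
  by (simp add: signed_perms_def)

lemma sp_out: "w \<in> signed_perms n \<Longrightarrow> x \<notin> AS n \<Longrightarrow> w x = x"
  using sp_perm permutes_not_in by fastforce

lemma sp_in: "w \<in> signed_perms n \<Longrightarrow> x \<in> AS n \<Longrightarrow> w x \<in> AS n"
  using sp_perm permutes_in_image by fastforce

lemma sp_inj: "w \<in> signed_perms n \<Longrightarrow> w a = w b \<Longrightarrow> a = b"
  using sp_perm permutes_inj by (metis injD)

lemma sp_abs_range: "w \<in> signed_perms n \<Longrightarrow> 1 \<le> x \<Longrightarrow> x \<le> int n \<Longrightarrow> 1 \<le> \<bar>w x\<bar> \<and> \<bar>w x\<bar> \<le> int n"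
  using sp_in[of w n x] by auto

lemma sp_abs_inj: "w \<in> signed_perms n \<Longrightarrow> 0 < a \<Longrightarrow> 0 < b \<Longrightarrow> \<bar>w a\<bar> = \<bar>w b\<bar> \<Longrightarrow> a = b"
proof -
  assume w: "w \<in> signed_perms n" and ab: "0 < a" "0 < b" "\<bar>w a\<bar> = \<bar>w b\<bar>"
  then have "w a = w b \<or> w a = w (- b)" using sp_odd[OF w, of b] by (auto simp: abs_if split: if_splits)
  then have "a = b \<or> a = - b" using sp_inj[OF w] by blast
  then show "a = b" using ab by auto
qed

lemma sp_abs_bij: assumes w: "w \<in> signed_perms n"
  shows "bij_betw (\<lambda>j. \<bar>w j\<bar>) {1..int n} {1..int n}"
proof -
  have inj: "inj_on (\<lambda>j. \<bar>w j\<bar>) {1..int n}"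
    by (rule inj_onI) (use sp_abs_inj[OF w] in auto)
  have sub: "(\<lambda>j. \<bar>w j\<bar>) ` {1..int n} \<subseteq> {1..int n}"
    using sp_abs_range[OF w] by auto
  have "(\<lambda>j. \<bar>w j\<bar>) ` {1..int n} = {1..int n}"
    using endo_inj_surj[OF _ sub inj] by simp
  then show ?thesis using inj by (simp add: bij_betw_def)
qed

definition chi :: "(int \<Rightarrow> int) \<Rightarrow> int \<Rightarrow> bool" where
  "chi w i = (w i = i \<or> w \<bar>w i\<bar> > w i)"

lemma wexc_chi: "wexc n w = card {i \<in> {1..int n}. chi w i}"
  by (simp add: wexc_def chi_def)

lemma card_filter_sum: "finite A \<Longrightarrow> card {i\<in>A. P i} = (\<Sum>i\<in>A. if P i then 1 else 0)"
proof (induction A rule: finite_induct)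
  case (insert x F)
  have "{i \<in> insert x F. P i} = (if P x then insert x {i\<in>F. P i} else {i\<in>F. P i})" by auto
  then show ?case using insert by auto
qed simp

lemma wexc_sum: "wexc n w = (\<Sum>i\<in>{1..int n}. if chi w i then 1 else 0)"
  unfolding wexc_chi by (rule card_filter_sum) simp

lemma wexc_aexc: assumes w: "w \<in> signed_perms n" shows "wexc n w + aexc n w = n"
proof -
  have eq: "{i \<in> {1..int n}. w i = - i \<or> w \<bar>w i\<bar> < w i} = {1..int n} - {i \<in> {1..int n}. chi w i}"
  proof (intro set_eqI iffI)
    fix i assume "i \<in> {i \<in> {1..int n}. w i = - i \<or> w \<bar>w i\<bar> < w i}"
    then show "i \<in> {1..int n} - {i \<in> {1..int n}. chi w i}" by (auto simp: chi_def)
  next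
    fix i assume i: "i \<in> {1..int n} - {i \<in> {1..int n}. chi w i}"
    then have "w i \<noteq> i" "\<not> w \<bar>w i\<bar> > w i" by (auto simp: chi_def)
    moreover have "w \<bar>w i\<bar> \<noteq> w i \<or> w i = - i"
    proof (rule ccontr)
      assume "\<not> ?thesis"
      then have "\<bar>w i\<bar> = i" "w i \<noteq> - i" using sp_inj[OF w] by auto
      then show False using \<open>w i \<noteq> i\<close> by (auto simp: abs_if split: if_splits)
    qed
    ultimately show "i \<in> {i \<in> {1..int n}. w i = - i \<or> w \<bar>w i\<bar> < w i}" using i by auto
  qed
  have "aexc n w = card {1..int n} - wexc n w"
    unfolding aexc_def eq wexc_chi by (rule card_Diff_subset) (auto intro: finite_subset[of _ "{1..int n}"])
  moreover have "wexc n w \<le> card {1..int n}" unfolding wexc_chi by (rule card_mono) auto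
  ultimately show ?thesis by simp
qed

lemma cyc_le: "cyc n w \<le> n"
  unfolding cyc_def using card_image_le[of "{1..int n}"] by fastforce


definition Tp :: "int \<Rightarrow> int \<Rightarrow> int \<Rightarrow> int" where
  "Tp i N = Transposition.transpose i N \<circ> Transposition.transpose (-i) (-N)"
definition Sg :: "int \<Rightarrow> int \<Rightarrow> int \<Rightarrow> int" where
  "Sg e N = (if e = 1 then id else Transposition.transpose N (-N))"
definition ins :: "nat \<Rightarrow> (int \<Rightarrow> int) \<Rightarrow> int \<times> int \<Rightarrow> int \<Rightarrow> int" where
  "ins n w c = w \<circ> Sg (snd c) (int n + 1) \<circ> Tp (fst c) (int n + 1)"
definition rcv :: "nat \<Rightarrow> (int \<Rightarrow> int) \<Rightarrow> int \<Rightarrow> int \<Rightarrow> int \<Rightarrow> int" where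
  "rcv n w i e = w \<circ> Tp i (int n + 1) \<circ> Sg e (int n + 1)"

lemma ins_apply:
  assumes w: "w \<in> signed_perms n" and i: "1 \<le> i" "i \<le> int n + 1" and e: "e = 1 \<or> e = -1"
  shows "ins n w (i,e) x = (if x = i then e*(int n+1) else if x = -i then -(e*(int n+1))
     else if x = int n+1 then w i else if x = -(int n+1) then - w i else w x)"
proof -
  have wN: "w (int n + 1) = int n + 1" "w (-(int n + 1)) = -(int n + 1)"
    using sp_out[OF w] by auto
  show ?thesis using i e wN sp_odd[OF w, of i]
    by (auto simp: ins_def Tp_def Sg_def Transposition.transpose_def)
qed

lemma rcv_apply:
  assumes w: "w \<in> signed_perms (Suc n)" and i: "1 \<le> i" "i \<le> int n + 1" and e: "e = 1 \<or> e = -1"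
    and wi: "w i = e * (int n + 1)"
  shows "rcv n w i e x = (if x = int n+1 then int n+1 else if x = -(int n+1) then -(int n+1)
     else if x = i then w (int n+1) else if x = -i then - w (int n+1) else w x)"
proof -
  have wi': "w (-i) = - (e * (int n + 1))" using sp_odd[OF w, of i] wi by simp
  have wN: "w (-(int n + 1)) = - w (int n + 1)" by (rule sp_odd[OF w])
  show ?thesis using i e wi wi' wN
    by (auto simp: rcv_def Tp_def Sg_def Transposition.transpose_def)
qed


lemma Tp_perm: "i \<in> AS (Suc n) \<Longrightarrow> Tp i (int n + 1) permutes AS (Suc n)"
  unfolding Tp_def by (rule permutes_compose; rule permutes_swap_id) auto

lemma Sg_perm: "Sg e (int n + 1) permutes AS (Suc n)"
  unfolding Sg_def by (auto intro!: permutes_swap_id)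

lemma sp_perm_Suc: "w \<in> signed_perms n \<Longrightarrow> w permutes AS (Suc n)"
  by (rule permutes_subset[OF sp_perm]) auto

lemma ins_mem:
  assumes w: "w \<in> signed_perms n" and i: "1 \<le> i" "i \<le> int n + 1" and e: "e = 1 \<or> e = -1"
  shows "ins n w (i,e) \<in> signed_perms (Suc n)"
proof -
  have p: "ins n w (i,e) permutes AS (Suc n)"
    unfolding ins_def fst_conv snd_conv
    by (rule permutes_compose[OF Tp_perm permutes_compose[OF Sg_perm sp_perm_Suc[OF w]]]) (use i in auto)
  have o: "ins n w (i,e) (- x) = - ins n w (i,e) x" for x
    unfolding ins_apply[OF w i e] using sp_odd[OF w] i by auto
  show ?thesis using p o by (simp add: signed_perms_def)
qed

lemma rcv_mem:
  assumes w: "w \<in> signed_perms (Suc n)" and i: "1 \<le> i" "i \<le> int n + 1" and e: "e = 1 \<or> e = -1"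
    and wi: "w i = e * (int n + 1)"
  shows "rcv n w i e \<in> signed_perms n"
proof -
  have p: "rcv n w i e permutes AS (Suc n)"
    unfolding rcv_def
    by (rule permutes_compose[OF Sg_perm permutes_compose[OF Tp_perm sp_perm[OF w]]]) (use i in auto)
  have p2: "rcv n w i e permutes AS n"
    by (rule permutes_superset[OF p]) (auto simp: rcv_apply[OF w i e wi])
  have o: "rcv n w i e (- x) = - rcv n w i e x" for x
    unfolding rcv_apply[OF w i e wi] using sp_odd[OF w] i by auto
  show ?thesis using p2 o by (simp add: signed_perms_def)
qed

lemma ins_rcv:
  assumes w: "w \<in> signed_perms (Suc n)" and i: "1 \<le> i" "i \<le> int n + 1" and e: "e = 1 \<or> e = -1"
    and wi: "w i = e * (int n + 1)"
  shows "ins n (rcv n w i e) (i,e) = w"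
proof
  fix x
  have wi': "w (-i) = - (e * (int n + 1))" using sp_odd[OF w, of i] wi by simp
  have wN: "w (-(int n + 1)) = - w (int n + 1)" by (rule sp_odd[OF w])
  show "ins n (rcv n w i e) (i, e) x = w x"
    unfolding ins_apply[OF rcv_mem[OF w i e wi] i e] rcv_apply[OF w i e wi]
    using wi wi' wN i by auto
qed

lemma rcv_ins:
  assumes w: "w \<in> signed_perms n" and i: "1 \<le> i" "i \<le> int n + 1" and e: "e = 1 \<or> e = -1"
  shows "rcv n (ins n w (i,e)) i e = w"
proof
  fix x
  have wi: "ins n w (i,e) i = e * (int n + 1)" by (simp add: ins_apply[OF w i e])
  have wN: "w (int n + 1) = int n + 1" "w (-(int n + 1)) = -(int n + 1)"
    using sp_out[OF w] by auto
  show "rcv n (ins n w (i, e)) i e x = w x"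
    unfolding rcv_apply[OF ins_mem[OF w i e] i e wi] ins_apply[OF w i e]
    using wN i sp_odd[OF w, of i] by auto
qed

lemma exists_pos:
  assumes w: "w \<in> signed_perms (Suc n)"
  shows "\<exists>i e. 1 \<le> i \<and> i \<le> int n + 1 \<and> (e = 1 \<or> e = -1) \<and> w i = e * (int n + 1)"
proof -
  obtain s where s: "w s = int n + 1" using permutes_surj[OF sp_perm[OF w]] by (metis surjD)
  have "s \<in> AS (Suc n)"
  proof (rule ccontr)
    assume "s \<notin> AS (Suc n)"
    then have "w s = s" by (rule sp_out[OF w])
    then show False using s \<open>s \<notin> AS (Suc n)\<close> by auto
  qed
  then have "1 \<le> \<bar>s\<bar> \<and> \<bar>s\<bar> \<le> int n + 1" by auto
  moreover have "w \<bar>s\<bar> = (if s > 0 then 1 else -1) * (int n + 1)"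
    using s sp_odd[OF w, of s] by auto
  ultimately show ?thesis by (metis (full_types))
qed

lemma pos_unique:
  assumes w: "w \<in> signed_perms (Suc n)" and i: "1 \<le> i" "1 \<le> i2"
    and e: "e = 1 \<or> e = -1" "e2 = 1 \<or> e2 = -1"
    and wi: "w i = e * (int n + 1)" "w i2 = e2 * (int n + 1)"
  shows "i = i2 \<and> e = e2"
proof (cases "e = e2")
  case True
  then show ?thesis using wi sp_inj[OF w, of i i2] by simp
next
  case False
  then have "w i = w (- i2)" using wi e sp_odd[OF w, of i2] by auto
  then have "i = - i2" by (rule sp_inj[OF w])
  then show ?thesis using i by simp
qed

definition CH :: "nat \<Rightarrow> (int \<times> int) set" where
  "CH n = {1..int n + 1} \<times> {1, -1}"

lemma ins_bij: "bij_betw (\<lambda>(w,c). ins n w c) (signed_perms n \<times> CH n) (signed_perms (Suc n))"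
proof (rule bij_betwI')
  fix a b assume a: "a \<in> signed_perms n \<times> CH n" and b: "b \<in> signed_perms n \<times> CH n"
  obtain w i e where a': "a = (w,(i,e))" by (metis prod.collapse)
  obtain w2 i2 e2 where b': "b = (w2,(i2,e2))" by (metis prod.collapse)
  have w: "w \<in> signed_perms n" "1 \<le> i" "i \<le> int n + 1" "e = 1 \<or> e = -1" using a a' by (auto simp: CH_def)
  have w2: "w2 \<in> signed_perms n" "1 \<le> i2" "i2 \<le> int n + 1" "e2 = 1 \<or> e2 = -1" using b b' by (auto simp: CH_def)
  show "((\<lambda>(w,c). ins n w c) a = (\<lambda>(w,c). ins n w c) b) = (a = b)"
  proof
    assume eq: "(\<lambda>(w,c). ins n w c) a = (\<lambda>(w,c). ins n w c) b"
    then have eq': "ins n w (i,e) = ins n w2 (i2,e2)" using a' b' by simp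
    have m: "ins n w (i,e) \<in> signed_perms (Suc n)" by (rule ins_mem) (use w in auto)
    have v1: "ins n w (i,e) i = e * (int n + 1)" by (simp add: ins_apply w)
    have v2: "ins n w (i,e) i2 = e2 * (int n + 1)" unfolding eq' by (simp add: ins_apply w2)
    have ie: "i = i2 \<and> e = e2" by (rule pos_unique[OF m _ _ _ _ v1 v2]) (use w w2 in auto)
    have "w = w2" using rcv_ins[of w n i e] rcv_ins[of w2 n i2 e2] w w2 eq' ie by metis
    then show "a = b" using a' b' ie by simp
  qed simp
next
  fix a assume a: "a \<in> signed_perms n \<times> CH n"
  obtain w i e where a': "a = (w,(i,e))" by (metis prod.collapse)
  have w: "w \<in> signed_perms n" "1 \<le> i" "i \<le> int n + 1" "e = 1 \<or> e = -1" using a a' by (auto simp: CH_def)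
  show "(\<lambda>(w,c). ins n w c) a \<in> signed_perms (Suc n)" using a' ins_mem[OF w] by simp
next
  fix w' assume w': "w' \<in> signed_perms (Suc n)"
  obtain i e where ie: "1 \<le> i" "i \<le> int n + 1" "e = 1 \<or> e = -1" "w' i = e * (int n + 1)"
    using exists_pos[OF w'] by blast
  show "\<exists>a\<in>signed_perms n \<times> CH n. w' = (\<lambda>(w,c). ins n w c) a"
    by (rule bexI[of _ "(rcv n w' i e, (i, e))"])
       (use ins_rcv[OF w' ie] rcv_mem[OF w' ie] ie in \<open>auto simp: CH_def\<close>)
qed


lemma Icc_Suc: "{1..int (Suc n)} = insert (int n + 1) {1..int n}"
  by auto

lemma wexc_fix:
  assumes w: "w \<in> signed_perms n" and e: "e = 1 \<or> e = -1"
  shows "wexc (Suc n) (ins n w (int n + 1, e)) = wexc n w + (if e = 1 then 1 else 0)"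
proof -
  let ?W = "ins n w (int n + 1, e)"
  have i: "1 \<le> int n + 1" "int n + 1 \<le> int n + 1" by auto
  have A: "chi ?W t = chi w t" if t: "t \<in> {1..int n}" for t
  proof -
    have r: "1 \<le> \<bar>w t\<bar> \<and> \<bar>w t\<bar> \<le> int n" using sp_abs_range[OF w] t by auto
    have "?W t = w t" using t by (simp add: ins_apply[OF w i e])
    moreover have "?W \<bar>w t\<bar> = w \<bar>w t\<bar>" using r by (simp add: ins_apply[OF w i e])
    ultimately show ?thesis by (simp add: chi_def)
  qed
  have B: "chi ?W (int n + 1) = (e = 1)"
    using e by (auto simp: chi_def ins_apply[OF w i e])
  have "wexc (Suc n) ?W = (if chi ?W (int n + 1) then 1 else 0) + (\<Sum>t\<in>{1..int n}. if chi ?W t then 1 else 0)"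
    unfolding wexc_sum Icc_Suc by (subst sum.insert) auto
  also have "(\<Sum>t\<in>{1..int n}. if chi ?W t then 1 else 0) = wexc n w"
    unfolding wexc_sum by (rule sum.cong) (use A in auto)
  finally show ?thesis using B by simp
qed

lemma wexc_ins:
  assumes w: "w \<in> signed_perms n" and e: "e = 1 \<or> e = -1" and j: "1 \<le> j" "j \<le> int n"
  shows "wexc (Suc n) (ins n w (\<bar>w j\<bar>, e)) + (if chi w j then 1 else 0) = wexc n w + 1"
proof -
  define i where "i = \<bar>w j\<bar>"
  let ?W = "ins n w (i, e)"
  have ir: "1 \<le> i" "i \<le> int n" using sp_abs_range[OF w j] by (auto simp: i_def)
  have i: "1 \<le> i" "i \<le> int n + 1" using ir by auto
  note ap = ins_apply[OF w i e]
  have A: "chi ?W t = chi w t" if t: "t \<in> {1..int n}" "t \<noteq> i" "t \<noteq> j" for t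
  proof -
    have r: "1 \<le> \<bar>w t\<bar> \<and> \<bar>w t\<bar> \<le> int n" using sp_abs_range[OF w] t by auto
    have ne: "\<bar>w t\<bar> \<noteq> i" using sp_abs_inj[OF w, of t j] t j unfolding i_def by auto
    have "?W t = w t" using t ir by (simp add: ap)
    moreover have "?W \<bar>w t\<bar> = w \<bar>w t\<bar>" using r ne ir by (simp add: ap)
    ultimately show ?thesis by (simp add: chi_def)
  qed
  have rj: "1 \<le> \<bar>w i\<bar> \<and> \<bar>w i\<bar> \<le> int n" using sp_abs_range[OF w] ir by auto
  have B: "chi ?W (int n + 1) = (if j = i then e = 1 else chi w i)"
  proof (cases "j = i")
    case True
    then have "\<bar>w i\<bar> = i" unfolding i_def by simp
    then show ?thesis using True e ir by (auto simp: chi_def ap abs_if split: if_splits)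
  next
    case False
    have ne: "\<bar>w i\<bar> \<noteq> i"
    proof
      assume "\<bar>w i\<bar> = i"
      then have "\<bar>w i\<bar> = \<bar>w j\<bar>" by (simp add: i_def)
      then have "i = j" using sp_abs_inj[OF w, of i j] ir j by auto
      then show False using False by simp
    qed
    then have "w i \<noteq> i" using ir by auto
    then show ?thesis using False ne rj ir by (auto simp: chi_def ap)
  qed
  have C1: "chi ?W i = (e = -1)"
    using e ir rj by (auto simp: chi_def ap)
  have C2: "chi ?W j = (e = 1)" if ji: "j \<noteq> i"
  proof -
    have "w j \<noteq> j" "\<bar>w j\<bar> = i" using ji j unfolding i_def by auto
    then show ?thesis using e ir ji j by (auto simp: chi_def ap)
  qed
  define g where "g = (\<lambda>t. if chi w t then 1 else (0::nat))"
  define g' where "g' = (\<lambda>t. if chi ?W t then 1 else (0::nat))"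
  have sub: "{i, j} \<subseteq> {1..int n}" using ir j by auto
  have s1: "wexc (Suc n) ?W = g' (int n + 1) + sum g' ({1..int n} - {i,j}) + sum g' {i,j}"
    unfolding wexc_sum Icc_Suc g'_def
    by (subst sum.insert) (auto simp: sum.subset_diff[OF sub])
  have s2: "wexc n w = sum g ({1..int n} - {i,j}) + sum g {i,j}"
    unfolding wexc_sum g_def by (auto simp: sum.subset_diff[OF sub])
  have s3: "sum g' ({1..int n} - {i,j}) = sum g ({1..int n} - {i,j})"
    by (rule sum.cong) (auto simp: g_def g'_def A)
  have "wexc (Suc n) ?W + (if chi w j then 1 else 0) = wexc n w + 1"
  proof (cases "j = i")
    case True
    then show ?thesis using s1 s2 s3 B C1 e by (auto simp: g_def g'_def)
  next
    case False
    then show ?thesis using s1 s2 s3 B C1 C2 e by (auto simp: g_def g'_def)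
  qed
  then show ?thesis by (simp add: i_def)
qed


definition orb :: "(int \<Rightarrow> int) \<Rightarrow> int \<Rightarrow> int set" where
  "orb f l = {(f ^^ m) l | m. True}"

lemma cyc_orb: "cyc n w = card (orb (\<lambda>j. \<bar>w j\<bar>) ` {1..int n})"
  by (simp add: cyc_def orb_def)

lemma orb_self: "l \<in> orb f l"
  unfolding orb_def by (auto intro: exI[of _ 0])

lemma orb_step: "z \<in> orb f l \<Longrightarrow> f z \<in> orb f l"
proof -
  assume "z \<in> orb f l"
  then obtain m where "z = (f ^^ m) l" unfolding orb_def by auto
  then have "f z = (f ^^ Suc m) l" by simp
  then show ?thesis unfolding orb_def by blast
qed

lemma orb_min: assumes "l \<in> Y" "\<forall>z\<in>Y. f z \<in> Y" shows "orb f l \<subseteq> Y"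
proof -
  have "(f ^^ m) l \<in> Y" for m by (induction m) (use assms in auto)
  then show ?thesis unfolding orb_def by auto
qed

lemma orb_sub: "z \<in> orb f l \<Longrightarrow> orb f z \<subseteq> orb f l"
  by (rule orb_min) (auto intro: orb_step)

lemma funpow_agree:
  assumes "l \<in> X" "\<forall>x\<in>X. f x \<in> X" "\<forall>x\<in>X. g x = f x"
  shows "(g ^^ m) l = (f ^^ m) l \<and> (f ^^ m) l \<in> X"
  by (induction m) (use assms in auto)

lemma orb_agree:
  assumes "l \<in> X" "\<forall>x\<in>X. f x \<in> X" "\<forall>x\<in>X. g x = f x"
  shows "orb g l = orb f l"
  unfolding orb_def using funpow_agree[OF assms] by auto

lemma orb_ins:
  assumes l: "l \<in> X" and i: "i \<in> X" and N: "N \<notin> X" and fX: "\<forall>x\<in>X. f x \<in> X"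
    and g: "\<forall>x\<in>X. x \<noteq> i \<longrightarrow> g x = f x" and gi: "g i = N" and gN: "g N = f i"
  shows "orb g l = orb f l \<union> (if i \<in> orb f l then {N} else {})"
proof
  have oX: "orb f l \<subseteq> X" by (rule orb_min) (use l fX in auto)
  show "orb g l \<subseteq> orb f l \<union> (if i \<in> orb f l then {N} else {})"
  proof (rule orb_min)
    show "l \<in> orb f l \<union> (if i \<in> orb f l then {N} else {})" using orb_self by auto
    show "\<forall>z\<in>orb f l \<union> (if i \<in> orb f l then {N} else {}). g z \<in> orb f l \<union> (if i \<in> orb f l then {N} else {})"
    proof
      fix z assume z: "z \<in> orb f l \<union> (if i \<in> orb f l then {N} else {})"
      show "g z \<in> orb f l \<union> (if i \<in> orb f l then {N} else {})"
      proof (cases "z \<in> orb f l")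
        case True
        then show ?thesis using g gi oX orb_step[OF True] by (cases "z = i") auto
      next
        case False
        then have "z = N" "i \<in> orb f l" using z by (auto split: if_splits)
        then show ?thesis using gN orb_step by auto
      qed
    qed
  qed
  have A: "orb f l \<subseteq> orb g l \<inter> X"
  proof (rule orb_min)
    show "l \<in> orb g l \<inter> X" using orb_self l by auto
    show "\<forall>z\<in>orb g l \<inter> X. f z \<in> orb g l \<inter> X"
    proof
      fix z assume z: "z \<in> orb g l \<inter> X"
      show "f z \<in> orb g l \<inter> X"
      proof (cases "z = i")
        case True
        then have "g (g z) \<in> orb g l" using z orb_step by blast
        then show ?thesis using True gi gN fX i by auto
      next
        case False
        then show ?thesis using z g fX orb_step[of z g l] by auto
      qed
    qed
  qed
  moreover have "i \<in> orb f l \<Longrightarrow> N \<in> orb g l"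
    using A orb_step[of i g l] gi by auto
  ultimately show "orb f l \<union> (if i \<in> orb f l then {N} else {}) \<subseteq> orb g l" by auto
qed

lemma sp_return:
  assumes w: "w \<in> signed_perms n" and l: "l \<in> {1..int n}"
  shows "l \<in> orb (\<lambda>j. \<bar>w j\<bar>) (\<bar>w l\<bar>)"
proof -
  define f where "f = (\<lambda>j. \<bar>w j\<bar>)"
  define h where "h = (\<lambda>x. if x \<in> {1..int n} then \<bar>w x\<bar> else x)"
  have "bij_betw h {1..int n} {1..int n} = bij_betw (\<lambda>j. \<bar>w j\<bar>) {1..int n} {1..int n}"
    by (rule bij_betw_cong) (simp add: h_def)
  then have "bij_betw h {1..int n} {1..int n}" using sp_abs_bij[OF w] by simp
  moreover have "\<And>x. x \<notin> {1..int n} \<Longrightarrow> h x = x" unfolding h_def by (rule if_not_P)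
  ultimately have "h permutes {1..int n}" by (rule bij_imp_permutes)
  then have "permutation h" by (rule permutes_imp_permutation[rotated]) simp
  then have "l \<in> orbit h l" by (rule permutation_self_in_orbit)
  then have "\<exists>m. l = (h ^^ m) l \<and> 0 < m" unfolding orbit_altdef by (simp only: mem_Collect_eq)
  then obtain m where mm: "l = (h ^^ m) l \<and> 0 < m" by (rule exE)
  have m: "0 < m" using mm by (rule conjunct2)
  have fX: "\<forall>x\<in>{1..int n}. f x \<in> {1..int n}" using sp_abs_range[OF w] by (auto simp: f_def)
  have hf: "\<forall>x\<in>{1..int n}. h x = f x" by (simp add: h_def f_def)
  have hm: "(h ^^ m) l = (f ^^ m) l" using funpow_agree[OF l fX hf] by blast
  obtain m' where m': "m = Suc m'" using m by (cases m) auto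
  have "l = (h ^^ m) l" using mm by (rule conjunct1)
  also have "\<dots> = (f ^^ m) l" by (rule hm)
  also have "\<dots> = (f ^^ m') (f l)" unfolding m' by (simp only: funpow_Suc_right o_apply)
  finally have "l \<in> orb f (f l)" unfolding orb_def by blast
  then show ?thesis by (simp add: f_def)
qed


lemma cyc_fix:
  assumes w: "w \<in> signed_perms n" and e: "e = 1 \<or> e = -1"
  shows "cyc (Suc n) (ins n w (int n + 1, e)) = cyc n w + 1"
proof -
  let ?W = "ins n w (int n + 1, e)"
  define f where "f = (\<lambda>j. \<bar>w j\<bar>)"
  define f' where "f' = (\<lambda>j. \<bar>?W j\<bar>)"
  define X where "X = {1..int n}"
  have i: "1 \<le> int n + 1" "int n + 1 \<le> int n + 1" by auto
  have fX: "\<forall>x\<in>X. f x \<in> X" using sp_abs_range[OF w] by (auto simp: f_def X_def)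
  have ag: "\<forall>x\<in>X. f' x = f x" by (auto simp: f_def f'_def X_def ins_apply[OF w i e])
  have fN: "f' (int n + 1) = int n + 1" using e by (auto simp: f'_def ins_apply[OF w i e])
  have oN: "orb f' (int n + 1) = {int n + 1}"
  proof
    show "orb f' (int n + 1) \<subseteq> {int n + 1}" by (rule orb_min) (use fN in auto)
    show "{int n + 1} \<subseteq> orb f' (int n + 1)" using orb_self by auto
  qed
  have oX: "orb f l \<subseteq> X" if "l \<in> X" for l by (rule orb_min) (use that fX in auto)
  have img: "orb f' ` {1..int (Suc n)} = insert {int n + 1} (orb f ` X)"
  proof -
    have "orb f' ` {1..int (Suc n)} = insert (orb f' (int n + 1)) (orb f' ` X)"
      unfolding Icc_Suc X_def by simp
    also have "orb f' ` X = orb f ` X"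
      by (rule image_cong[OF refl], rule orb_agree[OF _ fX ag])
    finally show ?thesis using oN by simp
  qed
  have nin: "{int n + 1} \<notin> orb f ` X" using oX by (force simp: X_def)
  have "cyc (Suc n) ?W = card (insert {int n + 1} (orb f ` X))"
    unfolding cyc_orb img[unfolded f'_def] ..
  also have "\<dots> = card (orb f ` X) + 1" using nin by (simp add: X_def)
  also have "card (orb f ` X) = cyc n w" by (simp add: cyc_orb f_def X_def)
  finally show ?thesis .
qed

lemma cyc_ins:
  assumes w: "w \<in> signed_perms n" and e: "e = 1 \<or> e = -1" and i: "1 \<le> i" "i \<le> int n"
  shows "cyc (Suc n) (ins n w (i, e)) = cyc n w"
proof -
  let ?W = "ins n w (i, e)"
  define N where "N = int n + 1"
  define f where "f = (\<lambda>j. \<bar>w j\<bar>)"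
  define f' where "f' = (\<lambda>j. \<bar>?W j\<bar>)"
  define X where "X = {1..int n}"
  define H where "H = (\<lambda>S. S \<union> (if i \<in> S then {N} else {}))"
  have i': "1 \<le> i" "i \<le> int n + 1" using i by auto
  note ap = ins_apply[OF w i' e]
  have iX: "i \<in> X" using i by (simp add: X_def)
  have NX: "N \<notin> X" by (simp add: X_def N_def)
  have fX: "\<forall>x\<in>X. f x \<in> X" using sp_abs_range[OF w] by (auto simp: f_def X_def)
  have ag: "\<forall>x\<in>X. x \<noteq> i \<longrightarrow> f' x = f x" using i by (auto simp: f_def f'_def X_def ap)
  have fi: "f' i = N" using e by (auto simp: f'_def N_def ap)
  have fN: "f' N = f i" using i by (auto simp: f'_def f_def N_def ap)
  have oi: "orb f' l = H (orb f l)" if "l \<in> X" for l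
    unfolding H_def by (rule orb_ins[OF that iX NX fX ag fi fN])
  have oX: "orb f l \<subseteq> X" if "l \<in> X" for l by (rule orb_min) (use that fX in auto)
  have oN: "orb f' N = orb f' i"
  proof
    have "N \<in> orb f' i" using orb_step[OF orb_self[where l=i and f=f']] fi by simp
    then show "orb f' N \<subseteq> orb f' i" by (rule orb_sub)
  next
    have r: "i \<in> orb f (f i)" using sp_return[OF w, of i] iX by (simp add: f_def X_def)
    have fiX: "f i \<in> X" using fX iX by blast
    have "i \<in> orb f' (f i)" using oi[OF fiX] r by (simp add: H_def)
    moreover have "f i \<in> orb f' N" using orb_step[OF orb_self[where l=N and f=f']] fN by simp
    ultimately have "i \<in> orb f' N" using orb_sub by blast
    then show "orb f' i \<subseteq> orb f' N" by (rule orb_sub)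
  qed
  have img: "orb f' ` {1..int (Suc n)} = H ` (orb f ` X)"
  proof -
    have "orb f' ` {1..int (Suc n)} = insert (orb f' N) (orb f' ` X)"
      unfolding Icc_Suc X_def N_def by simp
    also have "\<dots> = orb f' ` X" using oN iX by auto
    also have "\<dots> = H ` (orb f ` X)" unfolding image_image by (rule image_cong) (auto simp: oi)
    finally show ?thesis .
  qed
  have inj: "inj_on H (orb f ` X)"
  proof (rule inj_onI)
    fix A B assume A: "A \<in> orb f ` X" and B: "B \<in> orb f ` X" and eq: "H A = H B"
    have "N \<notin> A" "N \<notin> B" using A B oX NX by auto
    then have "A = H A - {N}" "B = H B - {N}" unfolding H_def by auto
    then show "A = B" using eq by simp
  qed
  have "cyc (Suc n) ?W = card (H ` (orb f ` X))"
    unfolding cyc_orb img[unfolded f'_def] ..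
  also have "\<dots> = card (orb f ` X)" by (rule card_image[OF inj])
  also have "\<dots> = cyc n w" by (simp add: cyc_orb f_def X_def)
  finally show ?thesis .
qed


definition FF :: "'a::comm_ring_1 \<Rightarrow> nat \<Rightarrow> (int \<Rightarrow> int) \<Rightarrow> 'a poly poly poly" where
  "FF k n w = varX ^ wexc n w * varY ^ aexc n w * cst k ^ (n - cyc n w)"

lemma sum_if_count:
  "finite X \<Longrightarrow> (\<Sum>j\<in>X. if P j then A1 else A2) =
     of_nat (card {j\<in>X. P j}) * A1 + of_nat (card {j\<in>X. \<not> P j}) * (A2::'b::comm_ring_1)"
proof (induction X rule: finite_induct)
  case (insert x F)
  have c1: "{j \<in> insert x F. P j} = (if P x then insert x {j\<in>F. P j} else {j\<in>F. P j})" by auto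
  have c2: "{j \<in> insert x F. \<not> P j} = (if P x then {j\<in>F. \<not> P j} else insert x {j\<in>F. \<not> P j})" by auto
  show ?case using insert unfolding c1 c2 by (auto simp: algebra_simps)
qed simp

lemma card_split: "finite X \<Longrightarrow> card {j\<in>X. P j} + card {j\<in>X. \<not> P j} = card X"
proof -
  assume X: "finite X"
  have "card ({j\<in>X. P j} \<union> {j\<in>X. \<not> P j}) = card {j\<in>X. P j} + card {j\<in>X. \<not> P j}"
    by (rule card_Un_disjoint) (use X in auto)
  moreover have "{j\<in>X. P j} \<union> {j\<in>X. \<not> P j} = X" by auto
  ultimately show ?thesis by simp
qed

lemma Icc_Suc': "{1..int n + 1} = insert (int n + 1) {1..int n}"
  by auto

lemma comb_step:
  assumes w: "w \<in> signed_perms n"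
  shows "(\<Sum>c\<in>CH n. FF k (Suc n) (ins n w c)) =
    (varX + varY) * FF k n w
    + 2 * cst k * (of_nat (wexc n w) * varX ^ wexc n w * varY ^ (aexc n w + 1)
                  + of_nat (aexc n w) * varX ^ (wexc n w + 1) * varY ^ aexc n w) * cst k ^ (n - cyc n w)"
proof -
  define a where "a = wexc n w"
  define b where "b = aexc n w"
  define K where "K = cst k ^ (n - cyc n w)"
  have ab: "a + b = n" using wexc_aexc[OF w] by (simp add: a_def b_def)
  have cle: "cyc n w \<le> n" by (rule cyc_le)
  have e2: "(e::int) \<in> {1, -1} \<Longrightarrow> e = 1 \<or> e = -1" for e by auto
  have fixv: "FF k (Suc n) (ins n w (int n + 1, e)) =
     (if e = 1 then varX ^ (a+1) * varY ^ b else varX ^ a * varY ^ (b+1)) * K"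
    if e: "e = 1 \<or> e = -1" for e
  proof -
    let ?W = "ins n w (int n + 1, e)"
    have m: "?W \<in> signed_perms (Suc n)" by (rule ins_mem[OF w _ _ e]) auto
    have we: "wexc (Suc n) ?W = a + (if e = 1 then 1 else 0)" using wexc_fix[OF w e] by (simp add: a_def)
    have ae: "aexc (Suc n) ?W = Suc n - wexc (Suc n) ?W" using wexc_aexc[OF m] by simp
    have cy: "Suc n - cyc (Suc n) ?W = n - cyc n w" using cyc_fix[OF w e] by simp
    show ?thesis unfolding FF_def cy ae we K_def using e ab by auto
  qed
  have insv: "FF k (Suc n) (ins n w (\<bar>w j\<bar>, e)) =
     (if chi w j then varX ^ a * varY ^ (b+1) else varX ^ (a+1) * varY ^ b) * cst k * K"
    if e: "e = 1 \<or> e = -1" and j: "j \<in> {1..int n}" for e j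
  proof -
    have jj: "1 \<le> j" "j \<le> int n" using j by auto
    have ir: "1 \<le> \<bar>w j\<bar>" "\<bar>w j\<bar> \<le> int n" using sp_abs_range[OF w jj] by auto
    let ?W = "ins n w (\<bar>w j\<bar>, e)"
    have m: "?W \<in> signed_perms (Suc n)" by (rule ins_mem[OF w _ _ e]) (use ir in auto)
    have we: "wexc (Suc n) ?W + (if chi w j then 1 else 0) = a + 1" using wexc_ins[OF w e jj] by (simp add: a_def)
    have ae: "aexc (Suc n) ?W = Suc n - wexc (Suc n) ?W" using wexc_aexc[OF m] by simp
    have cy: "Suc n - cyc (Suc n) ?W = Suc (n - cyc n w)" using cyc_ins[OF w e ir] cle by simp
    have "cst k ^ Suc (n - cyc n w) = cst k * K" by (simp add: K_def)
    then show ?thesis unfolding FF_def cy ae using we ab by (auto simp: algebra_simps)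
  qed
  have "(\<Sum>c\<in>CH n. FF k (Suc n) (ins n w c)) = (\<Sum>i\<in>{1..int n + 1}. \<Sum>e\<in>{1,-1}. FF k (Suc n) (ins n w (i, e)))"
    unfolding CH_def sum.cartesian_product by (rule sum.cong) auto
  also have "\<dots> = (\<Sum>e\<in>{1,-1}. FF k (Suc n) (ins n w (int n + 1, e)))
                 + (\<Sum>i\<in>{1..int n}. \<Sum>e\<in>{1,-1}. FF k (Suc n) (ins n w (i, e)))"
    unfolding Icc_Suc' by (subst sum.insert) auto
  also have "(\<Sum>e\<in>{1,-1}. FF k (Suc n) (ins n w (int n + 1, e))) = (varX ^ (a+1) * varY ^ b + varX ^ a * varY ^ (b+1)) * K"
    using fixv[of 1] fixv[of "-1"] by (simp add: algebra_simps)
  also have "(\<Sum>i\<in>{1..int n}. \<Sum>e\<in>{1,-1}. FF k (Suc n) (ins n w (i, e)))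
       = (\<Sum>j\<in>{1..int n}. \<Sum>e\<in>{1,-1}. FF k (Suc n) (ins n w (\<bar>w j\<bar>, e)))"
    by (rule sum.reindex_bij_betw[OF sp_abs_bij[OF w], symmetric])
  also have "\<dots> = (\<Sum>j\<in>{1..int n}. if chi w j then 2 * cst k * K * (varX ^ a * varY ^ (b+1)) else 2 * cst k * K * (varX ^ (a+1) * varY ^ b))"
  proof (rule sum.cong[OF refl])
    fix j assume j: "j \<in> {1..int n}"
    have "(\<Sum>e\<in>{1,-1}. FF k (Suc n) (ins n w (\<bar>w j\<bar>, e))) = FF k (Suc n) (ins n w (\<bar>w j\<bar>, 1)) + FF k (Suc n) (ins n w (\<bar>w j\<bar>, -1))"
      by simp
    also have "\<dots> = (if chi w j then varX ^ a * varY ^ (b+1) else varX ^ (a+1) * varY ^ b) * cst k * K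
        + (if chi w j then varX ^ a * varY ^ (b+1) else varX ^ (a+1) * varY ^ b) * cst k * K"
      using insv[OF _ j, of 1] insv[OF _ j, of "-1"] by simp
    finally show "(\<Sum>e\<in>{1,-1}. FF k (Suc n) (ins n w (\<bar>w j\<bar>, e))) = (if chi w j then 2 * cst k * K * (varX ^ a * varY ^ (b+1)) else 2 * cst k * K * (varX ^ (a+1) * varY ^ b))"
      by (cases "chi w j") (simp_all add: mult_2[symmetric] ac_simps)
  qed
  also have "\<dots> = of_nat a * (2 * cst k * K * (varX ^ a * varY ^ (b+1))) + of_nat b * (2 * cst k * K * (varX ^ (a+1) * varY ^ b))"
  proof -
    have ca: "card {j\<in>{1..int n}. chi w j} = a" by (simp add: a_def wexc_chi)
    have cb: "card {j\<in>{1..int n}. \<not> chi w j} = b" using card_split[of "{1..int n}" "chi w"] ca ab by simp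
    have sc: "(\<Sum>j\<in>{1..int n}. if chi w j then A1 else A2) = of_nat a * A1 + of_nat b * (A2::'a poly poly poly)" for A1 A2
      using sum_if_count[of "{1..int n}" "chi w" A1 A2] unfolding ca cb by simp
    show ?thesis by (rule sc)
  qed
  finally show ?thesis unfolding FF_def a_def[symmetric] b_def[symmetric] K_def[symmetric]
    by (simp add: algebra_simps)
qed

locale der =
  fixes D :: "'a::comm_ring_1 poly poly poly \<Rightarrow> 'a poly poly poly"
  assumes add: "\<forall>f g. D (f + g) = D f + D g"
    and leibniz: "\<forall>f g. D (f * g) = D f * g + f * D g"
begin
lemma D0: "D 0 = 0"
  using add by (metis add_cancel_right_right add_0)

lemma Dsum: "D (\<Sum>x\<in>A. g x) = (\<Sum>x\<in>A. D (g x))"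
  by (induction A rule: infinite_finite_induct) (auto simp: D0 add)

lemma Dpow: "D (f ^ m) = of_nat m * f ^ (m - 1) * D f"
proof (induction m)
  case 0
  have "D 1 = D (1 * 1)" by simp
  also have "\<dots> = D 1 * 1 + 1 * D 1" using leibniz by blast
  finally show ?case by simp
next
  case (Suc m)
  have "D (f ^ Suc m) = D f * f ^ m + f * D (f ^ m)" using leibniz by simp
  also have "\<dots> = of_nat (Suc m) * f ^ m * D f"
    using Suc by (cases m) (auto simp: algebra_simps)
  finally show ?case by simp
qed
end

lemma sp0: "signed_perms 0 = {id}"
  by (auto simp: signed_perms_def)

lemma FF0: "FF k 0 id = 1"
  by (simp add: FF_def wexc_def aexc_def cyc_def)

lemma Dmain:
  fixes k :: "'a::comm_ring_1"
    and D :: "'a poly poly poly \<Rightarrow> 'a poly poly poly"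
  assumes add: "\<forall>f g. D (f + g) = D f + D g"
    and leibniz: "\<forall>f g. D (f * g) = D f * g + f * D g"
    and const: "\<forall>c. D (cst c) = 0"
    and DI: "D varI = varI * (varX + varY)"
    and Dx: "D varX = 2 * cst k * varX * varY"
    and Dy: "D varY = 2 * cst k * varX * varY"
  shows "(D ^^ n) varI = varI * (\<Sum>w\<in>signed_perms n. FF k n w)"
proof -
  interpret der D using add leibniz by unfold_locales
  have Dc: "D (cst k ^ m) = 0" for m using Dpow[of "cst k" m] const by simp
  have xx: "of_nat a * varX ^ (a - 1) * varX = of_nat a * (varX ^ a :: 'a poly poly poly)" for a
    by (cases a) (simp_all add: ac_simps)
  have yy: "of_nat b * varY ^ (b - 1) * varY = of_nat b * (varY ^ b :: 'a poly poly poly)" for b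
    by (cases b) (simp_all add: ac_simps)
  have DF: "D (FF k n w) = 2 * cst k * (of_nat (wexc n w) * varX ^ wexc n w * varY ^ (aexc n w + 1)
                  + of_nat (aexc n w) * varX ^ (wexc n w + 1) * varY ^ aexc n w) * cst k ^ (n - cyc n w)" for n w
  proof -
    define a where "a = wexc n w"
    define b where "b = aexc n w"
    define K where "K = cst k ^ (n - cyc n w)"
    have "D (FF k n w) = D (varX ^ a * varY ^ b * K)" by (simp add: FF_def a_def b_def K_def)
    also have "\<dots> = (D (varX ^ a) * varY ^ b + varX ^ a * D (varY ^ b)) * K"
      using leibniz Dc by (simp add: K_def)
    also have "\<dots> = ((of_nat a * varX ^ (a - 1) * varX) * (2 * cst k * varY) * varY ^ b
                     + varX ^ a * ((of_nat b * varY ^ (b - 1) * varY) * (2 * cst k * varX))) * K"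
      by (simp add: Dpow Dx Dy ac_simps)
    also have "\<dots> = 2 * cst k * (of_nat a * varX ^ a * varY ^ (b + 1) + of_nat b * varX ^ (a + 1) * varY ^ b) * K"
      unfolding xx yy by (simp add: algebra_simps)
    finally show ?thesis by (simp add: a_def b_def K_def)
  qed
  show ?thesis
  proof (induction n)
    case 0
    then show ?case by (simp add: sp0 FF_def wexc_def aexc_def cyc_def)
  next
    case (Suc n)
    have "(D ^^ Suc n) varI = D (varI * (\<Sum>w\<in>signed_perms n. FF k n w))" using Suc by simp
    also have "\<dots> = varI * (\<Sum>w\<in>signed_perms n. (varX + varY) * FF k n w + D (FF k n w))"
      using leibniz DI by (simp add: Dsum sum.distrib sum_distrib_left algebra_simps)
    also have "(\<Sum>w\<in>signed_perms n. (varX + varY) * FF k n w + D (FF k n w))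
        = (\<Sum>w\<in>signed_perms n. \<Sum>c\<in>CH n. FF k (Suc n) (ins n w c))"
      by (rule sum.cong[OF refl]) (simp add: comb_step DF)
    also have "\<dots> = (\<Sum>p\<in>signed_perms n \<times> CH n. FF k (Suc n) ((\<lambda>(w,c). ins n w c) p))"
      unfolding sum.cartesian_product by (rule sum.cong) auto
    also have "\<dots> = (\<Sum>w'\<in>signed_perms (Suc n). FF k (Suc n) w')"
      by (rule sum.reindex_bij_betw[OF ins_bij])
    finally show ?case .
  qed
qed

theorem lemma3:
  fixes k :: "'a::comm_ring_1"
    and D :: "'a poly poly poly \<Rightarrow> 'a poly poly poly"
  assumes add: "\<forall>f g. D (f + g) = D f + D g"
    and leibniz: "\<forall>f g. D (f * g) = D f * g + f * D g"
    and const: "\<forall>c. D (cst c) = 0"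
    and DI: "D varI = varI * (varX + varY)"
    and Dx: "D varX = 2 * cst k * varX * varY"
    and Dy: "D varY = 2 * cst k * varX * varY"
  shows "\<forall>n\<ge>1. (D ^^ n) varI =
           varI * (\<Sum>w\<in>signed_perms n.
                     varX ^ wexc n w * varY ^ aexc n w * cst k ^ (n - cyc n w))"
  using Dmain[OF add leibniz const DI Dx Dy] by (simp add: FF_def)

end
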